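(* Let $1\le p<q$ be integers (not necessarily coprime), and let $u=0^{q-p}1^{p}$. Then for every binary word $w\in\{0,1\}^q$ with exactly $p$ ones, $$\mathcal{S}_i(u)\le \mathcal{S}_i(w)\quad\text{for all } 1\le i\le q.$$ In other words, the orbit of $u$ is the greatest element of the set $\mathbb{W}_{p,q}$ of orbits with respect to the majorization order $\prec$.
   Context: Binary alphabet $\{0,1\}$ with $0<1$; words of equal length are compared lexicographically. For a word $x=x_1\cdots x_n$, $(x)_2=\sum_{i=1}^n x_i2^{n-i}$. The cyclic shift is $\sigma(w_1\cdots w_n)=w_2\cdots w_nw_1$. For $w\in\{0,1\}^q$, the orbit $\mathcal{O}(w)=(\mathcal{O}_1(w),\dots,\mathcal{O}_q(w))$ is the list of the $q$ words $w,\sigma(w),\dots,\sigma^{q-1}(w)$ arranged in lexicographic order from smallest to largest (with repetition), and the base-2 orbit is $\mathcal{I}(w)=(\mathcal{I}_1(w),\dots,\mathcal{I}_q(w))$ with $\mathcal{I}_k(w)=(\mathcal{O}_k(w))_2$. Partial sums: $\mathcal{S}_i(w)=\sum_{k=1}^i\mathcal{I}_k(w)$. $\mathbb{W}_{p,q}$ denotes the set of orbits (words up to cyclic shift) of binary words of length $q$ with $p$ ones. For orbits $w,w'$, $w'\prec w$ means $\mathcal{S}_i(w')\ge\mathcal{S}_i(w)$ for all $1\le i\le q$. *)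

theory Defs
  imports Main "HOL-Library.List_Lexorder"
begin

text \<open>Binary words are lists of naturals with entries in {0,1}.
  The order on lists from List_Lexorder is the lexicographic order
  (on words of equal length this is the usual lexicographic order).\<close>

definition binary_word :: "nat \<Rightarrow> nat \<Rightarrow> nat list \<Rightarrow> bool" where
  "binary_word p q w \<longleftrightarrow> length w = q \<and> set w \<subseteq> {0,1} \<and> count_list w 1 = p"

definition base2 :: "nat list \<Rightarrow> nat" where
  "base2 x = (\<Sum>i<length x. x ! i * 2 ^ (length x - 1 - i))"

definition orbit :: "nat list \<Rightarrow> nat list list" where
  "orbit w = sort (map (\<lambda>k. rotate k w) [0..<length w])"

definition base2_orbit :: "nat list \<Rightarrow> nat \<Rightarrow> nat" where
  "base2_orbit w k = base2 (orbit w ! (k - 1))"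

definition partial_sum :: "nat list \<Rightarrow> nat \<Rightarrow> nat" where
  "partial_sum w i = (\<Sum>k=1..i. base2_orbit w k)"

end

theory Submission
  imports Defs "HOL-Combinatorics.Permutations"
begin

lemma base2_Nil[simp]: "base2 [] = 0" by (simp add: base2_def)

lemma base2_Cons[simp]: "base2 (a # xs) = a * 2 ^ length xs + base2 xs"
proof -
  have "base2 (a # xs) = (\<Sum>i<Suc (length xs). (a#xs) ! i * 2 ^ (length xs - i))"
    by (simp add: base2_def)
  also have "\<dots> = a * 2 ^ length xs + (\<Sum>i<length xs. xs ! i * 2 ^ (length xs - Suc i))"
    by (subst sum.lessThan_Suc_shift) simp
  also have "\<dots> = a * 2 ^ length xs + base2 xs" by (simp add: base2_def)
  finally show ?thesis .
qed

lemma base2_append: "base2 (xs @ ys) = base2 xs * 2 ^ length ys + base2 ys"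
  by (induction xs) (auto simp: algebra_simps power_add)

lemma base2_lt: "set xs \<subseteq> {0,1} \<Longrightarrow> base2 xs < 2 ^ length xs"
proof (induction xs)
  case (Cons a xs)
  then have "a \<le> 1" "base2 xs < 2 ^ length xs" by auto
  then have "a * 2 ^ length xs + base2 xs < 2 * 2 ^ length xs"
    by (metis add_mono_thms_linordered_field(4) mult_1 mult_2 mult_right_mono zero_le)
  then show ?case by simp
qed simp

lemma base2_compl: "set xs \<subseteq> {0,1} \<Longrightarrow> base2 xs + base2 (map (\<lambda>b. 1 - b) xs) + 1 = 2 ^ length xs"
proof (induction xs)
  case (Cons a xs)
  then have "a = 0 \<or> a = 1" "base2 xs + base2 (map (\<lambda>b. 1 - b) xs) + 1 = 2 ^ length xs" by auto
  then show ?case by auto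
qed simp

lemma base2_zeros[simp]: "base2 (replicate n 0 @ xs) = base2 xs"
  by (induction n) auto

lemma base2_ones: "base2 (replicate n 1) + 1 = 2 ^ n"
  by (induction n) auto

lemma base2_snoc_zeros: "base2 (xs @ replicate n 0) = base2 xs * 2 ^ n"
  by (simp add: base2_append base2_zeros[of n "[]", simplified])

lemma base2_mono:
  "length x = length y \<Longrightarrow> set x \<subseteq> {0,1} \<Longrightarrow> set y \<subseteq> {0,1} \<Longrightarrow> x \<le> y \<Longrightarrow> base2 x \<le> base2 y"
proof (induction x arbitrary: y)
  case Nil then show ?case by simp
next
  case (Cons a x)
  then obtain b y' where y: "y = b # y'" by (cases y) auto
  from Cons.prems y have len: "length x = length y'" and ab: "a \<in> {0,1}" "b \<in> {0,1}"
    and sx: "set x \<subseteq> {0,1}" and sy: "set y' \<subseteq> {0,1}" by auto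
  from Cons.prems(4) y have "a < b \<or> a = b \<and> x \<le> y'"
    by simp
  then show ?case
  proof
    assume "a < b"
    with ab have "a = 0" "b = 1" by auto
    with base2_lt[OF sx] len y show ?thesis by simp
  next
    assume "a = b \<and> x \<le> y'"
    with Cons.IH[OF len sx sy] y len show ?thesis by simp
  qed
qed


definition rv :: "nat list \<Rightarrow> nat \<Rightarrow> nat" where "rv w k = base2 (rotate k w)"

lemma sorted_prefix_min:
  fixes s :: "nat list"
  assumes "sorted s" "finite J" "J \<subseteq> {..<length s}"
  shows "(\<Sum>j<card J. s ! j) \<le> (\<Sum>j\<in>J. s ! j)"
  using assms(2,3)
proof (induction J rule: finite_linorder_max_induct)
  case empty then show ?case by simp
next
  case (insert b A)
  have bA: "b \<notin> A" using insert.hyps(2) by auto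
  have "A \<subseteq> {..<b}" using insert.hyps(2) by auto
  then have cA: "card A \<le> b" by (metis card_lessThan card_mono finite_lessThan)
  have bl: "b < length s" using insert.prems by auto
  have "s ! card A \<le> s ! b" using sorted_nth_mono[OF assms(1) cA bl] .
  moreover have "(\<Sum>j<card A. s ! j) \<le> (\<Sum>j\<in>A. s ! j)" using insert by auto
  moreover have "(\<Sum>j<card (insert b A). s!j) = (\<Sum>j<card A. s!j) + s!card A"
    using bA insert.hyps(1) by simp
  moreover have "(\<Sum>j\<in>insert b A. s!j) = s!b + (\<Sum>j\<in>A. s!j)" using bA insert.hyps(1) by simp
  ultimately show ?case by linarith
qed

lemma sort_perm:
  fixes g :: "nat \<Rightarrow> nat"
  obtains \<pi> where "\<pi> permutes {..<n}" "\<And>j. j < n \<Longrightarrow> sort (map g [0..<n]) ! j = g (\<pi> j)"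
proof -
  have "mset (sort (map g [0..<n])) = mset (map g [0..<n])" by simp
  then obtain \<pi> where p: "\<pi> permutes {..<length (map g [0..<n])}"
    "permute_list \<pi> (map g [0..<n]) = sort (map g [0..<n])"
    by (rule mset_eq_permutation)
  have "\<And>j. j < n \<Longrightarrow> sort (map g [0..<n]) ! j = g (\<pi> j)"
  proof -
    fix j assume j: "j < n"
    have "\<pi> j < n" using permutes_in_image[OF p(1)] j by simp
    then show "sort (map g [0..<n]) ! j = g (\<pi> j)"
      using p(2)[symmetric] permute_list_nth[OF p(1)] j by simp
  qed
  with p(1) that show ?thesis by simp
qed

lemma take_sort_le:
  fixes g :: "nat \<Rightarrow> nat"
  assumes "J \<subseteq> {..<n}"
  shows "sum_list (take (card J) (sort (map g [0..<n]))) \<le> (\<Sum>k\<in>J. g k)"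
proof -
  obtain \<pi> where p: "\<pi> permutes {..<n}" "\<And>j. j < n \<Longrightarrow> sort (map g [0..<n]) ! j = g (\<pi> j)"
    using sort_perm[of n g] by blast
  let ?s = "sort (map g [0..<n])"
  define J' where "J' = {j. j < n \<and> \<pi> j \<in> J}"
  have bij: "bij_betw \<pi> {..<n} {..<n}" using p(1) permutes_imp_bij by blast
  have inj: "inj_on \<pi> J'" using bij unfolding J'_def bij_betw_def by (auto intro: inj_on_subset)
  have img: "\<pi> ` J' = J"
  proof
    show "\<pi> ` J' \<subseteq> J" unfolding J'_def by auto
    show "J \<subseteq> \<pi> ` J'"
    proof
      fix k assume k: "k \<in> J"
      then have "k \<in> {..<n}" using assms by auto
      then have "k \<in> \<pi> ` {..<n}" using bij unfolding bij_betw_def by simp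
      then obtain j where "j \<in> {..<n}" "\<pi> j = k" by blast
      then show "k \<in> \<pi> ` J'" using k unfolding J'_def by auto
    qed
  qed
  have cJ: "card J' = card J" using card_image[OF inj] img by simp
  have J'sub: "J' \<subseteq> {..<length ?s}" unfolding J'_def by auto
  have fin: "finite J'" unfolding J'_def by auto
  have "(\<Sum>k\<in>J. g k) = (\<Sum>j\<in>J'. g (\<pi> j))" using sum.reindex[OF inj, of g] img by simp
  also have "\<dots> = (\<Sum>j\<in>J'. ?s ! j)" using p(2) unfolding J'_def by (intro sum.cong) auto
  finally have e: "(\<Sum>k\<in>J. g k) = (\<Sum>j\<in>J'. ?s ! j)" .
  have "card J \<le> n" using assms by (metis card_lessThan card_mono finite_lessThan)
  then have "sum_list (take (card J) ?s) = (\<Sum>j<card J. ?s ! j)"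
    by (simp add: sum_list_sum_nth atLeast0LessThan min_def)
  also have "\<dots> \<le> (\<Sum>j\<in>J'. ?s ! j)" using sorted_prefix_min[OF sorted_sort fin J'sub] cJ by simp
  finally show ?thesis using e by simp
qed

lemma take_sort_eq:
  fixes g :: "nat \<Rightarrow> nat"
  assumes "i \<le> n"
  obtains J where "J \<subseteq> {..<n}" "card J = i" "sum_list (take i (sort (map g [0..<n]))) = (\<Sum>k\<in>J. g k)"
proof -
  obtain \<pi> where p: "\<pi> permutes {..<n}" "\<And>j. j < n \<Longrightarrow> sort (map g [0..<n]) ! j = g (\<pi> j)"
    using sort_perm[of n g] by blast
  let ?s = "sort (map g [0..<n])"
  have bij: "bij_betw \<pi> {..<n} {..<n}" using p(1) permutes_imp_bij by blast
  have inj: "inj_on \<pi> {..<i}" using bij assms unfolding bij_betw_def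
    by (meson inj_on_subset lessThan_subset_iff)
  have sub: "\<pi> ` {..<i} \<subseteq> {..<n}" using bij assms unfolding bij_betw_def by auto
  have "sum_list (take i ?s) = (\<Sum>j<i. ?s ! j)"
    using assms by (simp add: sum_list_sum_nth atLeast0LessThan min_def)
  also have "\<dots> = (\<Sum>j<i. g (\<pi> j))" using p(2) assms by (intro sum.cong) auto
  also have "\<dots> = (\<Sum>k\<in>\<pi> ` {..<i}. g k)" using sum.reindex[OF inj, of g] by simp
  finally show ?thesis using that[OF sub] card_image[OF inj] by simp
qed

lemma partial_sum_eq:
  assumes "set w \<subseteq> {0,1}" "i \<le> length w"
  shows "partial_sum w i = sum_list (take i (sort (map (rv w) [0..<length w])))"
proof -
  let ?R = "map (\<lambda>k. rotate k w) [0..<length w]"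
  have setR: "\<And>x. x \<in> set ?R \<Longrightarrow> length x = length w \<and> set x \<subseteq> {0,1}"
    using assms(1) by auto
  have mono: "\<And>x y. x \<in> set (sort ?R) \<Longrightarrow> y \<in> set (sort ?R) \<Longrightarrow> x \<le> y \<Longrightarrow> base2 x \<le> base2 y"
  proof -
    fix x y assume "x \<in> set (sort ?R)" "y \<in> set (sort ?R)" "x \<le> y"
    then have "x \<in> set ?R" "y \<in> set ?R" "x \<le> y" by simp_all
    then show "base2 x \<le> base2 y" using setR[of x] setR[of y] base2_mono[of x y] by simp
  qed
  have "sorted (map base2 (sort ?R))"
    unfolding sorted_map
    by (rule sorted_wrt_mono_rel[OF mono sorted_sort])
  moreover have "map base2 ?R = map (rv w) [0..<length w]" by (simp add: rv_def)
  then have "mset (map base2 (sort ?R)) = mset (map (rv w) [0..<length w])"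
    by (metis mset_map mset_sort)
  ultimately have eq: "sort (map (rv w) [0..<length w]) = map base2 (orbit w)"
    unfolding orbit_def by (intro properties_for_sort) simp_all
  have "partial_sum w i = (\<Sum>k=1..i. base2 (orbit w ! (k - 1)))"
    by (simp add: partial_sum_def base2_orbit_def)
  also have "\<dots> = (\<Sum>j<i. base2 (orbit w ! j))"
    by (induction i) auto
  also have "\<dots> = sum_list (take i (map base2 (orbit w)))"
    using assms(2) by (simp add: sum_list_sum_nth atLeast0LessThan min_def orbit_def)
  finally show ?thesis using eq by simp
qed


lemma arith1: "(A - 1) * (B - 1) \<le> X \<Longrightarrow> R + T1 = 2*X + T2 \<Longrightarrow> B + T1 \<le> 1 + T2 \<Longrightarrow> 1 \<le> A \<Longrightarrow> 1 \<le> B \<Longrightarrow> (2*A - 1)*(B - 1) \<le> (R::nat)"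
proof -
  assume h: "(A - 1) * (B - 1) \<le> X" "R + T1 = 2*X + T2" "B + T1 \<le> 1 + T2" "1 \<le> A" "1 \<le> B"
  obtain A' B' where AB: "A = A' + 1" "B = B' + 1" using h(4,5) by (metis add.commute le_Suc_ex)
  have "A' * B' \<le> X" using h(1) AB by simp
  moreover have "(2*A - 1)*(B - 1) = 2 * (A'*B') + B'" using AB by (simp add: algebra_simps)
  ultimately show ?thesis using h(2,3) AB by linarith
qed

lemma mod_shift_surj:
  assumes "j < (n::nat)"
  shows "((j + (n - c mod n)) mod n + c) mod n = j"
proof -
  have n: "n > 0" using assms by simp
  have "((j + (n - c mod n)) mod n + c) mod n = (j + (n - c mod n) + c) mod n"
    by (simp add: mod_add_left_eq)
  moreover have "j + (n - c mod n) + c = j + n * Suc (c div n)"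
  proof -
    have e1: "c = c mod n + n * (c div n)" by simp
    have e2: "n * Suc (c div n) = n + n * (c div n)" by simp
    have e3: "c mod n < n" using n by simp
    show ?thesis using e1 e2 e3 by linarith
  qed
  moreover have "(j + n * Suc (c div n)) mod n = j mod n" by (rule mod_mult_self2)
  ultimately show ?thesis using assms by (metis mod_less)
qed

lemma mod_shift_bij:
  assumes "n > 0"
  shows "bij_betw (\<lambda>k. (k + c) mod n) {..<(n::nat)} {..<n}"
proof -
  have img: "(\<lambda>k. (k + c) mod n) ` {..<n} = {..<n}"
  proof
    show "(\<lambda>k. (k + c) mod n) ` {..<n} \<subseteq> {..<n}" using assms by auto
    show "{..<n} \<subseteq> (\<lambda>k. (k + c) mod n) ` {..<n}"
    proof
      fix j assume "j \<in> {..<n}"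
      then have "j = ((j + (n - c mod n)) mod n + c) mod n" "(j + (n - c mod n)) mod n \<in> {..<n}"
        using mod_shift_surj[of j n c] assms by auto
      then show "j \<in> (\<lambda>k. (k + c) mod n) ` {..<n}" by blast
    qed
  qed
  then have "inj_on (\<lambda>k. (k + c) mod n) {..<n}"
    by (intro eq_card_imp_inj_on) auto
  with img show ?thesis unfolding bij_betw_def by simp
qed

lemma rv_rotate: "rv (rotate s w) k = rv w ((k + s) mod length w)"
  unfolding rv_def by (simp add: rotate_rotate rotate_conv_mod[of "k + s" w])

lemma rotate_nth_Cons:
  assumes "k < length w"
  shows "rotate k w = w ! k # (drop (Suc k) w @ take k w)"
  using assms by (simp add: rotate_drop_take Cons_nth_drop_Suc)

lemma rv_first:
  assumes "set w \<subseteq> {0,1}" "k < length w"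
  shows "rv w k = w ! k * 2 ^ (length w - 1) + base2 (drop (Suc k) w @ take k w)"
    and "base2 (drop (Suc k) w @ take k w) < 2 ^ (length w - 1)"
proof -
  have s: "set (drop (Suc k) w @ take k w) \<subseteq> {0,1}" using assms(1)
    using set_drop_subset[of "Suc k" w] set_take_subset[of k w] by auto
  have l: "length (drop (Suc k) w @ take k w) = length w - 1" using assms(2) by simp
  show "rv w k = w ! k * 2 ^ (length w - 1) + base2 (drop (Suc k) w @ take k w)"
    unfolding rv_def using rotate_nth_Cons[OF assms(2)] l by simp
  show "base2 (drop (Suc k) w @ take k w) < 2 ^ (length w - 1)"
    using base2_lt[OF s] l by simp
qed

lemma rv_one:
  assumes "set w \<subseteq> {0,1}" "k < length w" "w ! k \<noteq> 0"
  shows "2 ^ (length w - 1) \<le> rv w k"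
proof -
  have "w ! k \<in> set w" using assms(2) by simp
  then have "w ! k = 1" using assms(1,3) by auto
  then show ?thesis using rv_first(1)[OF assms(1,2)] by simp
qed

lemma rv_zero:
  assumes "set w \<subseteq> {0,1}" "k < length w" "w ! k = 0"
  shows "rv w k < 2 ^ (length w - 1)"
  using rv_first[OF assms(1,2)] assms(3) by simp

lemma rv_snoc:
  assumes "k < length x"
  shows "rv (x @ [1]) k + base2 (take k x) = 2 * rv x k + 2 ^ k"
proof -
  have "rotate k (x @ [1]) = (drop k x @ [1]) @ take k x"
    using assms by (simp add: rotate_drop_take)
  moreover have "rotate k x = drop k x @ take k x" using assms by (simp add: rotate_drop_take)
  ultimately show ?thesis using assms
    by (simp add: rv_def base2_append algebra_simps power_add)
qed

lemma base2_allzero: "set xs \<subseteq> {0} \<Longrightarrow> base2 xs = 0"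
  by (induction xs) auto

lemma sum_pow2: "(\<Sum>k<i. (2::nat) ^ k) + 1 = 2 ^ i"
  by (induction i) auto

lemma lemT:
  assumes "x \<noteq> []" "x ! 0 = 0" "set x \<subseteq> {0,1}" "finite J" "J \<subseteq> {k. k < length x \<and> x ! k = 0}"
  shows "2 ^ card J + (\<Sum>k\<in>J. base2 (take k x)) \<le> 1 + (\<Sum>k\<in>J. 2 ^ k)"
  using assms(4,5)
proof (induction J rule: finite_linorder_max_induct)
  case empty then show ?case by simp
next
  case (insert b A)
  have bA: "b \<notin> A" using insert.hyps(2) by auto
  have Ab: "A \<subseteq> {..<b}" using insert.hyps(2) by auto
  have b: "b < length x" "x ! b = 0" using insert.prems by auto
  have IH: "2 ^ card A + (\<Sum>k\<in>A. base2 (take k x)) \<le> 1 + (\<Sum>k\<in>A. 2 ^ k)"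
    using insert by auto
  have key: "2 ^ card A + base2 (take b x) \<le> 2 ^ b"
  proof (cases "\<forall>j<b. x ! j = 0")
    case True
    then have "set (take b x) \<subseteq> {0}" by (auto simp: set_conv_nth)
    then have "base2 (take b x) = 0" by (rule base2_allzero)
    moreover have "card A \<le> b" using Ab by (metis card_lessThan card_mono finite_lessThan)
    ultimately show ?thesis by simp
  next
    case False
    then obtain j where j: "j < b" "x ! j \<noteq> 0" by auto
    then have "j \<notin> A" using insert.prems by auto
    then have "A \<subseteq> {..<b} - {j}" using Ab by auto
    moreover have "card ({..<b} - {j}) = b - 1" using j(1) by simp
    ultimately have "card A \<le> b - 1" by (metis card_mono finite_Diff finite_lessThan)
    then have c1: "2 ^ card A \<le> (2::nat) ^ (b - 1)" by simp
    have j0: "j \<noteq> 0" using j(2) assms(2) by (metis)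
    obtain y ys where x: "x = y # ys" using assms(1) by (cases x) auto
    have "y = 0" using x assms(2) by simp
    have "take b x = 0 # take (b - 1) ys" using x \<open>y = 0\<close> j j0 by (cases b) auto
    moreover have "set (take (b - 1) ys) \<subseteq> {0,1}" using assms(3) x
      set_take_subset[of "b - 1" ys] by auto
    ultimately have "base2 (take b x) < 2 ^ length (take (b - 1) ys)"
      using base2_lt[of "take (b - 1) ys"] by (simp del: length_take)
    also have "\<dots> \<le> 2 ^ (b - 1)" by simp
    finally have "base2 (take b x) < 2 ^ (b - 1)" .
    moreover have "(2::nat) ^ (b - 1) + 2 ^ (b - 1) = 2 ^ b" using j(1)
      by (cases b) auto
    ultimately show ?thesis using c1 by linarith
  qed
  have "(2::nat) ^ card (insert b A) = 2 * 2 ^ card A" using bA insert.hyps(1) by simp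
  moreover have "(\<Sum>k\<in>insert b A. base2 (take k x)) = base2 (take b x) + (\<Sum>k\<in>A. base2 (take k x))"
    using bA insert.hyps(1) by simp
  moreover have "(\<Sum>k\<in>insert b A. (2::nat) ^ k) = 2 ^ b + (\<Sum>k\<in>A. 2 ^ k)"
    using bA insert.hyps(1) by simp
  ultimately show ?case using IH key by linarith
qed


lemma exists_10:
  assumes "set w \<subseteq> {0,1}" "i < length w" "w ! i \<noteq> 0" "j < length w" "w ! j = 0"
  shows "\<exists>r<length w. w ! r \<noteq> 0 \<and> w ! (Suc r mod length w) = 0"
proof -
  let ?n = "length w"
  define z where "z = (LEAST j. j < ?n \<and> w ! j = 0)"
  have z: "z < ?n \<and> w ! z = 0" unfolding z_def by (rule LeastI[where k=j]) (use assms(4,5) in simp)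
  have zmin: "\<And>j. j < z \<Longrightarrow> w ! j \<noteq> 0"
    using not_less_Least z unfolding z_def by (metis (mono_tags, lifting) order.strict_trans)
  show ?thesis
  proof (cases "z = 0")
    case False
    then have "z - 1 < ?n" "w ! (z - 1) \<noteq> 0" "Suc (z - 1) mod ?n = z" using z zmin by auto
    then show ?thesis using z by metis
  next
    case True
    define S where "S = {i. i < ?n \<and> w ! i \<noteq> 0}"
    have fin: "finite S" "S \<noteq> {}" using assms(2,3) unfolding S_def by auto
    define mo where "mo = Max S"
    have o: "mo \<in> S" unfolding mo_def using fin by simp
    have omax: "\<And>i. i \<in> S \<Longrightarrow> i \<le> mo" unfolding mo_def using fin by simp
    have o1: "mo < ?n" "w ! mo \<noteq> 0" using o unfolding S_def by auto
    show ?thesis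
    proof (cases "Suc mo < ?n")
      case True
      then have "w ! Suc mo = 0" using omax[of "Suc mo"] unfolding S_def by force
      moreover have "Suc mo mod ?n = Suc mo" using True by simp
      ultimately show ?thesis using o1 by metis
    next
      case False
      then have "Suc mo = ?n" using o1 by simp
      then have "Suc mo mod ?n = 0" by simp
      then show ?thesis using o1 z True by metis
    qed
  qed
qed

lemma count_rotate: "count_list (rotate k w) a = count_list w a"
proof -
  let ?m = "k mod length w"
  have "count_list w a = count_list (take ?m w) a + count_list (drop ?m w) a"
    by (metis append_take_drop_id count_list_append)
  then show ?thesis by (simp add: rotate_drop_take)
qed

lemma easy0:
  "set w \<subseteq> {0,1} \<Longrightarrow> J \<subseteq> {k. k < length w \<and> w ! k = 0} \<Longrightarrow>
   (2 ^ count_list w 1 - 1) * (2 ^ card J - 1) \<le> (\<Sum>k\<in>J. rv w k)"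
proof (induction "length w" arbitrary: w J rule: less_induct)
  case less
  define n where "n = length w"
  define p where "p = count_list w 1"
  show ?case
  proof (cases "p = 0 \<or> J = {}")
    case True then show ?thesis unfolding p_def by auto
  next
    case False
    then have p1: "p \<ge> 1" and Jne: "J \<noteq> {}" by auto
    obtain j where j: "j \<in> J" using Jne by auto
    then have j': "j < n" "w ! j = 0" using less.prems(2) unfolding n_def by auto
    have "1 \<in> set w" using p1 unfolding p_def by (metis count_notin not_one_le_zero)
    then obtain i where i: "i < n" "w ! i = 1" unfolding n_def by (metis in_set_conv_nth)
    obtain r where r: "r < n" "w ! r \<noteq> 0" "w ! (Suc r mod n) = 0"
      using exists_10[OF less.prems(1), of i j] i j' unfolding n_def by auto
    define c where "c = Suc r"
    define w1 where "w1 = rotate c w"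
    define J1 where "J1 = {k. k < n \<and> (k + c) mod n \<in> J}"
    have n0: "n > 0" using r by simp
    have lw1: "length w1 = n" unfolding w1_def n_def by simp
    have w1nth: "\<And>k. k < n \<Longrightarrow> w1 ! k = w ! ((k + c) mod n)"
      unfolding w1_def n_def by (simp add: nth_rotate add.commute)
    have bij: "bij_betw (\<lambda>k. (k + c) mod n) {..<n} {..<n}" using mod_shift_bij[OF n0] .
    have J1sub: "J1 \<subseteq> {..<n}" unfolding J1_def by auto
    have img: "(\<lambda>k. (k + c) mod n) ` J1 = J"
    proof
      show "(\<lambda>k. (k + c) mod n) ` J1 \<subseteq> J" unfolding J1_def by auto
      show "J \<subseteq> (\<lambda>k. (k + c) mod n) ` J1"
      proof
        fix y assume y: "y \<in> J"
        then have "y \<in> {..<n}" using less.prems(2) unfolding n_def by auto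
        then have "y \<in> (\<lambda>k. (k + c) mod n) ` {..<n}" using bij unfolding bij_betw_def by simp
        then obtain k where "k < n" "(k + c) mod n = y" by auto
        then show "y \<in> (\<lambda>k. (k + c) mod n) ` J1" using y unfolding J1_def by auto
      qed
    qed
    have inj1: "inj_on (\<lambda>k. (k + c) mod n) J1"
      using bij J1sub unfolding bij_betw_def by (meson inj_on_subset)
    have "(\<Sum>k\<in>J1. rv w1 k) = (\<Sum>k\<in>J1. rv w ((k + c) mod n))"
      unfolding w1_def n_def by (simp add: rv_rotate)
    also have "\<dots> = (\<Sum>k\<in>J. rv w k)" using sum.reindex[OF inj1, of "rv w"] img by simp
    finally have sumeq: "(\<Sum>k\<in>J1. rv w1 k) = (\<Sum>k\<in>J. rv w k)" .
    have cardeq: "card J1 = card J" using card_image[OF inj1] img by simp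
    have setw1: "set w1 = set w" unfolding w1_def by simp
    have cw1: "count_list w1 1 = p" unfolding w1_def p_def by (rule count_rotate)
    have w10: "w1 ! 0 = 0" using w1nth[OF n0] r(3) unfolding c_def by simp
    have "n - 1 + c = r + n" unfolding c_def using n0 by simp
    then have "w1 ! (n - 1) = w ! r" using w1nth[of "n - 1"] n0 r(1) by simp
    moreover have "w ! r \<in> set w" using r(1) unfolding n_def by simp
    ultimately have w1last: "w1 ! (n - 1) = 1" using r(2) less.prems(1) by auto
    have n2: "n \<noteq> 1" using r w10 w1last by auto
    define x where "x = butlast w1"
    have w1ne: "w1 \<noteq> []" using lw1 n0 by auto
    have "last w1 = 1" using w1last last_conv_nth[OF w1ne] lw1 by simp
    then have w1x: "w1 = x @ [1]" unfolding x_def using append_butlast_last_id[OF w1ne] by simp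
    have lx: "length x = n - 1" unfolding x_def using lw1 by simp
    have xne: "x \<noteq> []" using lx n2 n0 by auto
    have x0: "x ! 0 = 0" using w10 w1x xne by (simp add: nth_append)
    have setx: "set x \<subseteq> {0,1}" using less.prems(1) setw1 w1x by auto
    have J1z: "J1 \<subseteq> {k. k < length x \<and> x ! k = 0}"
    proof
      fix k assume k: "k \<in> J1"
      then have k1: "k < n" "w1 ! k = 0" using w1nth less.prems(2) unfolding J1_def by auto
      then have "k \<noteq> n - 1" using w1last by auto
      then have "k < length x" using k1 lx by simp
      then show "k \<in> {k. k < length x \<and> x ! k = 0}" using k1 w1x by (simp add: nth_append)
    qed
    have cx: "count_list x 1 = p - 1" using cw1 w1x by simp
    have finJ1: "finite J1" using J1sub finite_subset by blast
    have IH: "(2 ^ (p - 1) - 1) * (2 ^ card J1 - 1) \<le> (\<Sum>k\<in>J1. rv x k)"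
      using less.hyps[of x J1] lx n0 setx J1z cx unfolding n_def by simp
    have T: "2 ^ card J1 + (\<Sum>k\<in>J1. base2 (take k x)) \<le> 1 + (\<Sum>k\<in>J1. 2 ^ k)"
      using lemT[OF xne x0 setx finJ1 J1z] .
    have "(\<Sum>k\<in>J1. rv w1 k) + (\<Sum>k\<in>J1. base2 (take k x)) = (\<Sum>k\<in>J1. rv w1 k + base2 (take k x))"
      by (simp add: sum.distrib)
    also have "\<dots> = (\<Sum>k\<in>J1. 2 * rv x k + 2 ^ k)"
      using J1z rv_snoc w1x by (intro sum.cong) auto
    also have "\<dots> = 2 * (\<Sum>k\<in>J1. rv x k) + (\<Sum>k\<in>J1. 2 ^ k)"
      by (simp add: sum.distrib sum_distrib_left)
    finally have S: "(\<Sum>k\<in>J1. rv w1 k) + (\<Sum>k\<in>J1. base2 (take k x)) =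
        2 * (\<Sum>k\<in>J1. rv x k) + (\<Sum>k\<in>J1. 2 ^ k)" .
    have "(2 * 2 ^ (p - 1) - 1) * (2 ^ card J1 - 1) \<le> (\<Sum>k\<in>J1. rv w1 k)"
      by (rule arith1[OF IH S T]) simp_all
    moreover have "(2::nat) * 2 ^ (p - 1) = 2 ^ p" using p1 by (cases p) auto
    ultimately show ?thesis using sumeq cardeq unfolding p_def by simp
  qed
qed


lemma card_zeros: "card {k. k < length w \<and> w ! k = a} = count_list w a"
  by (simp add: count_list_eq_length_filter length_filter_conv_card eq_commute)

lemma easy1:
  assumes "set w \<subseteq> {0,1}" "J \<subseteq> {..<length w}" "card J \<le> count_list w 0"
  shows "(2 ^ count_list w 1 - 1) * (2 ^ card J - 1) \<le> (\<Sum>k\<in>J. rv w k)"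
proof -
  define n where "n = length w"
  define Z where "Z = {k. k < n \<and> w ! k = 0}"
  have cZ: "card Z = count_list w 0" unfolding Z_def n_def by (rule card_zeros)
  have finZ: "finite Z" unfolding Z_def by auto
  have finJ: "finite J" using assms(2) finite_subset by blast
  define J1 where "J1 = J \<inter> Z"
  define J2 where "J2 = J - Z"
  have JJ: "J = J1 \<union> J2" "J1 \<inter> J2 = {}" unfolding J1_def J2_def by auto
  have fin12: "finite J1" "finite J2" unfolding J1_def J2_def using finJ by auto
  have cJ: "card J = card J1 + card J2" using JJ fin12 card_Un_disjoint by metis
  have "card (Z - J) = card Z - card (Z \<inter> J)" using finZ by (simp add: card_Diff_subset_Int)
  moreover have "Z \<inter> J = J1" unfolding J1_def by auto
  ultimately have "card J2 \<le> card (Z - J)" using cJ cZ assms(3) by simp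
  then obtain K where K: "K \<subseteq> Z - J" "card K = card J2" "finite K"
    by (rule obtain_subset_with_card_n)
  have "(\<Sum>k\<in>K. rv w k) \<le> of_nat (card K) * 2 ^ (n - 1)"
    by (rule sum_bounded_above) (use K rv_zero[OF assms(1)] in \<open>force simp: Z_def n_def\<close>)
  moreover have "of_nat (card J2) * 2 ^ (n - 1) \<le> (\<Sum>k\<in>J2. rv w k)"
    by (rule sum_bounded_below) (use assms(2) rv_one[OF assms(1)] in \<open>force simp: J2_def Z_def n_def\<close>)
  ultimately have KJ2: "(\<Sum>k\<in>K. rv w k) \<le> (\<Sum>k\<in>J2. rv w k)" using K(2) by simp
  have disj: "J1 \<inter> K = {}" using K(1) unfolding J1_def by auto
  have cJK: "card (J1 \<union> K) = card J" using card_Un_disjoint[OF fin12(1) K(3) disj] K(2) cJ by simp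
  have JKZ: "J1 \<union> K \<subseteq> {k. k < length w \<and> w ! k = 0}" using K(1) unfolding J1_def Z_def n_def by auto
  have "(2 ^ count_list w 1 - 1) * (2 ^ card (J1 \<union> K) - 1) \<le> (\<Sum>k\<in>J1 \<union> K. rv w k)"
    by (rule easy0[OF assms(1) JKZ])
  also have "\<dots> = (\<Sum>k\<in>J1. rv w k) + (\<Sum>k\<in>K. rv w k)" using sum.union_disjoint[OF fin12(1) K(3) disj] .
  also have "\<dots> \<le> (\<Sum>k\<in>J1. rv w k) + (\<Sum>k\<in>J2. rv w k)" using KJ2 by simp
  also have "\<dots> = (\<Sum>k\<in>J1 \<union> J2. rv w k)" by (rule sum.union_disjoint[symmetric, OF fin12 JJ(2)])
  also have "\<dots> = (\<Sum>k\<in>J. rv w k)" using JJ(1) by simp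
  finally show ?thesis using cJK by simp
qed

lemma sum_list_01: "set (w::nat list) \<subseteq> {0,1} \<Longrightarrow> sum_list w = count_list w 1"
  by (induction w) auto

lemma arith2:
  fixes t B P rs rk N :: nat
  shows "rs = 2 * B + t \<Longrightarrow> rk = t * P + B \<Longrightarrow> N = 2 * P \<Longrightarrow> 1 \<le> P \<Longrightarrow> rs + t * (N - 1) = 2 * rk"
proof -
  assume h: "rs = 2 * B + t" "rk = t * P + B" "N = 2 * P" "1 \<le> P"
  then obtain P' where "P = Suc P'" using not0_implies_Suc by fastforce
  with h show ?thesis by (simp add: algebra_simps)
qed

lemma rv_step:
  assumes "set w \<subseteq> {0,1}" "k < length w"
  shows "rv w (Suc k) + w ! k * (2 ^ length w - 1) = 2 * rv w k"
proof -
  let ?y = "drop (Suc k) w @ take k w"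
  have "rotate (Suc k) w = rotate1 (rotate k w)" by (simp add: rotate_def)
  then have "rotate (Suc k) w = ?y @ [w ! k]" using rotate_nth_Cons[OF assms(2)] by simp
  then have "rv w (Suc k) = 2 * base2 ?y + w ! k" unfolding rv_def by (simp add: base2_append)
  moreover have "rv w k = w ! k * 2 ^ (length w - 1) + base2 ?y" using rv_first(1)[OF assms] .
  moreover have "(2::nat) ^ length w = 2 * 2 ^ (length w - 1)" using assms(2) by (cases "length w") auto
  moreover have "(1::nat) \<le> 2 ^ (length w - 1)" by simp
  ultimately show ?thesis by (rule arith2)
qed

lemma rv_total:
  assumes "set w \<subseteq> {0,1}"
  shows "(\<Sum>k<length w. rv w k) = count_list w 1 * (2 ^ length w - 1)"
proof -
  let ?n = "length w"
  have "(\<Sum>k<?n. rv w (Suc k)) + (\<Sum>k<?n. w ! k) * (2 ^ ?n - 1) = (\<Sum>k<?n. 2 * rv w k)"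
    unfolding sum_distrib_right sum.distrib[symmetric] using rv_step[OF assms] by (intro sum.cong) auto
  moreover have "rv w ?n = rv w 0" unfolding rv_def by simp
  then have "(\<Sum>k<?n. rv w (Suc k)) = (\<Sum>k<?n. rv w k)"
    using sum.lessThan_Suc_shift[of "rv w" ?n] sum.lessThan_Suc[of "rv w" ?n] by simp
  moreover have "(\<Sum>k<?n. w ! k) = count_list w 1"
    using sum_list_01[OF assms] by (simp add: sum_list_sum_nth atLeast0LessThan)
  moreover have "(\<Sum>k<?n. 2 * rv w k) = 2 * (\<Sum>k<?n. rv w k)" by (simp add: sum_distrib_left)
  ultimately have "(\<Sum>k<?n. rv w k) + count_list w 1 * (2 ^ ?n - 1) = 2 * (\<Sum>k<?n. rv w k)"
    by simp
  then show ?thesis by linarith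
qed

lemma rv_compl:
  assumes "set w \<subseteq> {0,1}"
  shows "rv w k + rv (map (\<lambda>b. 1 - b) w) k + 1 = 2 ^ length w"
proof -
  have "set (rotate k w) \<subseteq> {0,1}" using assms by simp
  then show ?thesis unfolding rv_def rotate_map using base2_compl[of "rotate k w"] by simp
qed

lemma count_compl:
  fixes w :: "nat list"
  assumes "set w \<subseteq> {0,1}"
  shows "count_list (map (\<lambda>b. 1 - b) w) 1 = count_list w 0"
    and "count_list (map (\<lambda>b. 1 - b) w) 0 = count_list w 1"
proof -
  have "count_list (map (\<lambda>b. 1 - b) w) 1 = count_list w 0 \<and> count_list (map (\<lambda>b. 1 - b) w) 0 = count_list w 1"
    using assms
  proof (induction w)
    case (Cons a w)
    then have "a = 0 \<or> a = 1" by auto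
    with Cons show ?case by auto
  qed simp
  then show "count_list (map (\<lambda>b. 1 - b) w) 1 = count_list w 0"
    "count_list (map (\<lambda>b. 1 - b) w) 0 = count_list w 1" by auto
qed


lemma count01: "set (w::nat list) \<subseteq> {0,1} \<Longrightarrow> count_list w 0 + count_list w 1 = length w"
  by (induction w) auto

lemma count_rep: "count_list (replicate n x) y = (if x = y then n else 0)"
  by (induction n) auto

lemma rv_u:
  assumes "k \<le> a" "k < a + p"
  shows "rv (replicate a 0 @ replicate p 1) k = (2 ^ p - 1) * 2 ^ k"
proof -
  let ?u = "replicate a (0::nat) @ replicate p 1"
  have "rotate k ?u = drop k ?u @ take k ?u" using assms by (simp add: rotate_drop_take)
  also have "\<dots> = replicate (a - k) 0 @ (replicate p 1 @ replicate k 0)" using assms by simp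
  finally have "rv ?u k = base2 (replicate p 1) * 2 ^ k" unfolding rv_def
    by (simp add: base2_snoc_zeros)
  then show ?thesis using base2_ones[of p] by simp
qed

lemma rv_ub:
  assumes "t < p"
  shows "rv (replicate a 1 @ replicate p 0) (a + t) = (2 ^ a - 1) * 2 ^ t"
proof -
  let ?u = "replicate a (1::nat) @ replicate p 0"
  have "rotate (a + t) ?u = drop (a + t) ?u @ take (a + t) ?u" using assms by (simp add: rotate_drop_take)
  also have "\<dots> = replicate (p - t) 0 @ (replicate a 1 @ replicate t 0)" using assms by simp
  finally have "rv ?u (a + t) = base2 (replicate a 1) * 2 ^ t" unfolding rv_def
    by (simp add: base2_snoc_zeros)
  then show ?thesis using base2_ones[of a] by simp
qed

lemma arith3: "s0 + c = X \<Longrightarrow> c + cb + j = Y \<Longrightarrow> E \<le> cb \<Longrightarrow> s' + l = X \<Longrightarrow>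
  l + lb + j = Y \<Longrightarrow> lb = E \<Longrightarrow> s' \<le> (s0::nat)"
  by linarith

theorem theorem4:
  fixes p q :: nat and w :: "nat list"
  assumes "1 \<le> p" and "p < q"
    and "binary_word p q w"
  shows "\<forall>i. 1 \<le> i \<and> i \<le> q \<longrightarrow>
           partial_sum (replicate (q - p) 0 @ replicate p 1) i \<le> partial_sum w i"
proof (intro allI impI)
  fix i assume i: "1 \<le> i \<and> i \<le> q"
  define a where "a = q - p"
  define u where "u = replicate a (0::nat) @ replicate p 1"
  have lw: "length w = q" and sw: "set w \<subseteq> {0,1}" and cw1: "count_list w 1 = p"
    using assms(3) unfolding binary_word_def by auto
  have cw0: "count_list w 0 = a" using count01[OF sw] lw cw1 unfolding a_def by simp
  have lu: "length u = q" unfolding u_def a_def using assms(2) by simp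
  have su: "set u \<subseteq> {0,1}" unfolding u_def by auto
  have cu1: "count_list u 1 = p" unfolding u_def by (simp add: count_rep)
  have qap: "q = a + p" unfolding a_def using assms(2) by simp
  have Pu: "partial_sum u i = sum_list (take i (sort (map (rv u) [0..<q])))"
    using partial_sum_eq[OF su] lu i by simp
  have Pw: "partial_sum w i = sum_list (take i (sort (map (rv w) [0..<q])))"
    using partial_sum_eq[OF sw] lw i by simp
  obtain J0 where J0: "J0 \<subseteq> {..<q}" "card J0 = i" "partial_sum w i = (\<Sum>k\<in>J0. rv w k)"
    using take_sort_eq[of i q "rv w"] i Pw by auto
  have "\<exists>J'. J' \<subseteq> {..<q} \<and> card J' = i \<and> (\<Sum>k\<in>J'. rv u k) \<le> (\<Sum>k\<in>J0. rv w k)"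
  proof (cases "i \<le> a")
    case True
    have "(\<Sum>k<i. rv u k) = (\<Sum>k<i. (2 ^ p - 1) * 2 ^ k)"
    proof (intro sum.cong refl)
      fix k assume "k \<in> {..<i}"
      then show "rv u k = (2 ^ p - 1) * 2 ^ k" unfolding u_def using True qap i by (intro rv_u) auto
    qed
    also have "\<dots> = (2 ^ p - 1) * (2 ^ i - 1)"
    proof -
      have "(\<Sum>k<i. (2::nat) ^ k) = 2 ^ i - 1" using sum_pow2[of i] by linarith
      then show ?thesis by (simp add: sum_distrib_left[symmetric])
    qed
    also have "\<dots> \<le> (\<Sum>k\<in>J0. rv w k)"
      using easy1[OF sw, of J0] J0 lw cw0 cw1 True by simp
    finally show ?thesis using i by (intro exI[of _ "{..<i}"]) auto
  next
    case False
    define j where "j = q - i"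
    have jp: "j < p" unfolding j_def using False qap assms(1) i by linarith
    define L where "L = {a..<a+j}"
    define J' where "J' = {..<q} - L"
    have Lsub: "L \<subseteq> {..<q}" unfolding L_def j_def using i qap False by auto
    have cL: "card L = j" unfolding L_def by simp
    have finL: "finite L" unfolding L_def by simp
    have cJ': "card J' = i" unfolding J'_def using card_Diff_subset[OF finL Lsub] cL i unfolding j_def
      by simp
    define J0c where "J0c = {..<q} - J0"
    have cJ0c: "card J0c = j" unfolding J0c_def j_def using J0 by (simp add: card_Diff_subset finite_subset)
    define wb where "wb = map (\<lambda>b. 1 - b) w"
    define ub where "ub = map (\<lambda>b. 1 - b) u"
    have ubeq: "ub = replicate a 1 @ replicate p 0" unfolding ub_def u_def by simp
    have E1: "(\<Sum>k\<in>J0. rv w k) + (\<Sum>k\<in>J0c. rv w k) = p * (2 ^ q - 1)"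
      using sum.subset_diff[OF J0(1) finite_lessThan, of "rv w"] rv_total[OF sw] lw cw1
      unfolding J0c_def by simp
    have "(\<Sum>k\<in>J0c. rv w k + rv wb k + 1) = (\<Sum>k\<in>J0c. 2 ^ q)"
      unfolding wb_def using rv_compl[OF sw] lw by (intro sum.cong) auto
    moreover have "(\<Sum>k\<in>J0c. rv w k + rv wb k + 1) = (\<Sum>k\<in>J0c. rv w k) + (\<Sum>k\<in>J0c. rv wb k) + card J0c"
      by (simp only: sum.distrib sum_constant) simp
    moreover have "(\<Sum>k\<in>J0c. (2::nat) ^ q) = j * 2 ^ q" using cJ0c by simp
    ultimately have E2: "(\<Sum>k\<in>J0c. rv w k) + (\<Sum>k\<in>J0c. rv wb k) + j = j * 2 ^ q"
      using cJ0c by linarith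
    have swb: "set wb \<subseteq> {0,1}" unfolding wb_def by auto
    have J0csub: "J0c \<subseteq> {..<length wb}" unfolding J0c_def wb_def using lw by auto
    have cwb0: "count_list wb 0 = p" "count_list wb 1 = a"
      unfolding wb_def using count_compl[OF sw] cw0 cw1 by auto
    have E3: "(2 ^ a - 1) * (2 ^ j - 1) \<le> (\<Sum>k\<in>J0c. rv wb k)"
      using easy1[OF swb J0csub] cwb0 cJ0c jp by simp
    have U1: "(\<Sum>k\<in>J'. rv u k) + (\<Sum>k\<in>L. rv u k) = p * (2 ^ q - 1)"
      using sum.subset_diff[OF Lsub finite_lessThan, of "rv u"] rv_total[OF su] lu cu1
      unfolding J'_def by simp
    have "(\<Sum>k\<in>L. rv u k + rv ub k + 1) = (\<Sum>k\<in>L. 2 ^ q)"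
      unfolding ub_def using rv_compl[OF su] lu by (intro sum.cong) auto
    moreover have "(\<Sum>k\<in>L. rv u k + rv ub k + 1) = (\<Sum>k\<in>L. rv u k) + (\<Sum>k\<in>L. rv ub k) + card L"
      by (simp only: sum.distrib sum_constant) simp
    moreover have "(\<Sum>k\<in>L. (2::nat) ^ q) = j * 2 ^ q" using cL by simp
    ultimately have U2: "(\<Sum>k\<in>L. rv u k) + (\<Sum>k\<in>L. rv ub k) + j = j * 2 ^ q"
      using cL by linarith
    have "(\<Sum>k\<in>L. rv ub k) = (\<Sum>t<j. rv ub (a + t))"
      unfolding L_def using sum.shift_bounds_nat_ivl[of "rv ub" 0 a j]
      by (simp add: atLeast0LessThan add.commute)
    also have "\<dots> = (\<Sum>t<j. (2 ^ a - 1) * 2 ^ t)"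
    proof (intro sum.cong refl)
      fix t assume "t \<in> {..<j}"
      then show "rv ub (a + t) = (2 ^ a - 1) * 2 ^ t" unfolding ubeq using jp by (intro rv_ub) auto
    qed
    also have "\<dots> = (2 ^ a - 1) * (2 ^ j - 1)"
    proof -
      have "(\<Sum>k<j. (2::nat) ^ k) = 2 ^ j - 1" using sum_pow2[of j] by linarith
      then show ?thesis by (simp add: sum_distrib_left[symmetric])
    qed
    finally have U3: "(\<Sum>k\<in>L. rv ub k) = (2 ^ a - 1) * (2 ^ j - 1)" .
    have "(\<Sum>k\<in>J'. rv u k) \<le> (\<Sum>k\<in>J0. rv w k)" by (rule arith3[OF E1 E2 E3 U1 U2 U3])
    moreover have "J' \<subseteq> {..<q}" unfolding J'_def by auto
    ultimately show ?thesis using cJ' by (intro exI[of _ J']) simp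
  qed
  then obtain J' where J': "J' \<subseteq> {..<q}" "card J' = i" "(\<Sum>k\<in>J'. rv u k) \<le> (\<Sum>k\<in>J0. rv w k)"
    by blast
  have "partial_sum u i \<le> (\<Sum>k\<in>J'. rv u k)" using Pu take_sort_le[OF J'(1), of "rv u"] J'(2) by simp
  then show "partial_sum (replicate (q - p) 0 @ replicate p 1) i \<le> partial_sum w i"
    using J' J0 unfolding u_def a_def by simp
qed

end
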